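(* Let $t$ be a positive multiple of $12$ and let $n=t^2+1$. There exists a tree $T$ on $n$ vertices such that, for every (deterministic) strategy of the cat in the Cat and Mouse game on $T$, there is a sequence of mouse positions $(m_i)_{i\ge1}$ such that $\mathrm{rad}_T(M_i)>t/12$ for every $i$; that is, the mouse avoids being localised up to distance $t/12$ forever.
   Context: The Cat and Mouse game is played on a simple, undirected, connected graph $G$ in time steps $i=1,2,\dots$. The mouse occupies vertices $m_1,m_2,\dots$, where for $i\ge2$, $m_i$ equals $m_{i-1}$ or is a neighbour of $m_{i-1}$. At time $i$ the cat tests an arbitrary vertex $c_i$; for $i\ge2$ it is told $b_i=1$ if $d(c_i,m_i)\le d(c_{i-1},m_{i-1})$ and $b_i=0$ otherwise ($d$ = graph distance). A cat strategy is $(c_1,c_2,f)$ with $f:\bigcup_{i\in\mathbb N}\{0,1\}^i\to V(G)$ and $c_i=f(b_2,\dots,b_{i-1})$ for $i\ge3$; it is deterministic, fixed in advance, and known to the mouse (so the mouse's sequence may depend on it). $M_i$ is the set of vertices $v$ for which there exist $\tilde m_1,\dots,\tilde m_i$ with $\tilde m_i=v$, each $\tilde m_j$ in the closed neighbourhood of $\tilde m_{j-1}$, and for each $2\le j\le i$: $d(c_j,\tilde m_j)\le d(c_{j-1},\tilde m_{j-1})$ iff $b_j=1$. $\mathrm{rad}_G(W)=\min_{v\in V(G)}\max_{w\in W}d(v,w)$. *)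

theory Defs
  imports Complex_Main
begin

definition simple_graph :: "'a set \<Rightarrow> ('a \<Rightarrow> 'a \<Rightarrow> bool) \<Rightarrow> bool" where
  "simple_graph V E \<longleftrightarrow> finite V \<and> (\<forall>u v. E u v \<longrightarrow> u \<in> V \<and> v \<in> V \<and> u \<noteq> v \<and> E v u)"

definition walk :: "('a \<Rightarrow> 'a \<Rightarrow> bool) \<Rightarrow> 'a list \<Rightarrow> bool" where
  "walk E xs \<longleftrightarrow> xs \<noteq> [] \<and> (\<forall>i. Suc i < length xs \<longrightarrow> E (xs ! i) (xs ! Suc i))"

definition connected_graph :: "'a set \<Rightarrow> ('a \<Rightarrow> 'a \<Rightarrow> bool) \<Rightarrow> bool" where
  "connected_graph V E \<longleftrightarrow> (\<forall>u\<in>V. \<forall>v\<in>V. \<exists>xs. walk E xs \<and> hd xs = u \<and> last xs = v)"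

definition has_cycle :: "('a \<Rightarrow> 'a \<Rightarrow> bool) \<Rightarrow> bool" where
  "has_cycle E \<longleftrightarrow> (\<exists>xs. walk E xs \<and> distinct xs \<and> length xs \<ge> 3 \<and> E (last xs) (hd xs))"

definition is_tree :: "'a set \<Rightarrow> ('a \<Rightarrow> 'a \<Rightarrow> bool) \<Rightarrow> bool" where
  "is_tree V E \<longleftrightarrow> simple_graph V E \<and> V \<noteq> {} \<and> connected_graph V E \<and> \<not> has_cycle E"

definition gdist :: "('a \<Rightarrow> 'a \<Rightarrow> bool) \<Rightarrow> 'a \<Rightarrow> 'a \<Rightarrow> nat" where
  "gdist E u v = (LEAST k. \<exists>xs. walk E xs \<and> hd xs = u \<and> last xs = v \<and> length xs = Suc k)"

definition rad :: "'a set \<Rightarrow> ('a \<Rightarrow> 'a \<Rightarrow> bool) \<Rightarrow> 'a set \<Rightarrow> nat" where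
  "rad V E W = Min ((\<lambda>v. Max ((\<lambda>w. gdist E v w) ` W)) ` V)"

definition cat_strategy :: "'a set \<Rightarrow> 'a \<Rightarrow> 'a \<Rightarrow> (bool list \<Rightarrow> 'a) \<Rightarrow> bool" where
  "cat_strategy V c1 c2 f \<longleftrightarrow> c1 \<in> V \<and> c2 \<in> V \<and> (\<forall>bs. bs \<noteq> [] \<longrightarrow> f bs \<in> V)"

(* cat's test at time i, given the answers bs = [b_2,...,b_{i-1}] *)
definition cat_pos :: "'a \<Rightarrow> 'a \<Rightarrow> (bool list \<Rightarrow> 'a) \<Rightarrow> bool list \<Rightarrow> nat \<Rightarrow> 'a" where
  "cat_pos c1 c2 f bs i = (if i \<le> 1 then c1 else if i = 2 then c2 else f bs)"

(* answers: answers ... m i = [b_2, ..., b_i] (empty for i <= 1); mouse positions m 1, m 2, ... *)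
fun answers :: "('a \<Rightarrow> 'a \<Rightarrow> bool) \<Rightarrow> 'a \<Rightarrow> 'a \<Rightarrow> (bool list \<Rightarrow> 'a) \<Rightarrow> (nat \<Rightarrow> 'a) \<Rightarrow> nat \<Rightarrow> bool list" where
  "answers E c1 c2 f m 0 = []"
| "answers E c1 c2 f m (Suc 0) = []"
| "answers E c1 c2 f m (Suc (Suc k)) =
     answers E c1 c2 f m (Suc k) @
       [gdist E (cat_pos c1 c2 f (answers E c1 c2 f m (Suc k)) (Suc (Suc k))) (m (Suc (Suc k)))
        \<le> gdist E (cat_pos c1 c2 f (answers E c1 c2 f m k) (Suc k)) (m (Suc k))]"

definition cat_seq :: "('a \<Rightarrow> 'a \<Rightarrow> bool) \<Rightarrow> 'a \<Rightarrow> 'a \<Rightarrow> (bool list \<Rightarrow> 'a) \<Rightarrow> (nat \<Rightarrow> 'a) \<Rightarrow> nat \<Rightarrow> 'a" where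
  "cat_seq E c1 c2 f m i = cat_pos c1 c2 f (answers E c1 c2 f m (i - 1)) i"

definition bit_seq :: "('a \<Rightarrow> 'a \<Rightarrow> bool) \<Rightarrow> 'a \<Rightarrow> 'a \<Rightarrow> (bool list \<Rightarrow> 'a) \<Rightarrow> (nat \<Rightarrow> 'a) \<Rightarrow> nat \<Rightarrow> bool" where
  "bit_seq E c1 c2 f m i = (gdist E (cat_seq E c1 c2 f m i) (m i) \<le> gdist E (cat_seq E c1 c2 f m (i - 1)) (m (i - 1)))"

definition mouse_seq :: "'a set \<Rightarrow> ('a \<Rightarrow> 'a \<Rightarrow> bool) \<Rightarrow> (nat \<Rightarrow> 'a) \<Rightarrow> bool" where
  "mouse_seq V E m \<longleftrightarrow> (\<forall>i\<ge>1. m i \<in> V \<and> (m (Suc i) = m i \<or> E (m i) (m (Suc i))))"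

(* M_i: vertices consistent with all answers b_2..b_i received so far *)
definition Mset :: "'a set \<Rightarrow> ('a \<Rightarrow> 'a \<Rightarrow> bool) \<Rightarrow> 'a \<Rightarrow> 'a \<Rightarrow> (bool list \<Rightarrow> 'a) \<Rightarrow> (nat \<Rightarrow> 'a) \<Rightarrow> nat \<Rightarrow> 'a set" where
  "Mset V E c1 c2 f m i = {v. \<exists>m'. m' i = v \<and> (\<forall>j. 1 \<le> j \<and> j \<le> i \<longrightarrow> m' j \<in> V)
      \<and> (\<forall>j. 2 \<le> j \<and> j \<le> i \<longrightarrow>
            (m' j = m' (j - 1) \<or> E (m' (j - 1)) (m' j))
          \<and> ((gdist E (cat_seq E c1 c2 f m j) (m' j) \<le> gdist E (cat_seq E c1 c2 f m (j - 1)) (m' (j - 1)))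
               \<longleftrightarrow> bit_seq E c1 c2 f m j))}"

end

theory Submission
  imports Defs
begin


definition dep :: "nat \<Rightarrow> nat \<Rightarrow> nat" where
  "dep t v = (if v = 0 then 0 else (v - 1) mod t + 1)"
definition leg :: "nat \<Rightarrow> nat \<Rightarrow> nat" where
  "leg t v = (v - 1) div t"
definition sd :: "nat \<Rightarrow> nat \<Rightarrow> nat \<Rightarrow> nat" where
  "sd t u v = (if u = 0 \<or> v = 0 \<or> leg t u \<noteq> leg t v then dep t u + dep t v
     else (if dep t u \<le> dep t v then dep t v - dep t u else dep t u - dep t v))"
definition spE :: "nat \<Rightarrow> nat \<Rightarrow> nat \<Rightarrow> bool" where
  "spE t u v \<longleftrightarrow> u < t^2+1 \<and> v < t^2+1 \<and> sd t u v = 1"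

lemma dep_0[simp]: "dep t 0 = 0" by (simp add: dep_def)

lemma dep_bounds: "0 < t \<Longrightarrow> v \<noteq> 0 \<Longrightarrow> 1 \<le> dep t v \<and> dep t v \<le> t"
  by (simp add: dep_def Suc_leI)

lemma dep_eq_0: "dep t v = 0 \<longleftrightarrow> v = 0"
  by (simp add: dep_def)

lemma vert_decomp: "v \<noteq> 0 \<Longrightarrow> v = leg t v * t + dep t v"
proof -
  assume "v \<noteq> 0"
  have "v - 1 = (v - 1) div t * t + (v - 1) mod t" by simp
  then show ?thesis using \<open>v \<noteq> 0\<close> unfolding leg_def dep_def by simp
qed

lemma leg_mk: "1 \<le> d \<Longrightarrow> d \<le> t \<Longrightarrow> leg t (L * t + d) = L"
proof -
  assume a: "1 \<le> d" "d \<le> t"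
  then obtain d' where d: "d = Suc d'" "d' < t" by (cases d) auto
  have "L * t + d - 1 = d' + L * t" using d by simp
  then show ?thesis unfolding leg_def using d by simp
qed

lemma dep_mk: "1 \<le> d \<Longrightarrow> d \<le> t \<Longrightarrow> dep t (L * t + d) = d"
proof -
  assume a: "1 \<le> d" "d \<le> t"
  then obtain d' where d: "d = Suc d'" "d' < t" by (cases d) auto
  have "L * t + d - 1 = d' + L * t" using d by simp
  then show ?thesis unfolding dep_def using d by simp
qed

lemma vert_inj: "u \<noteq> 0 \<Longrightarrow> v \<noteq> 0 \<Longrightarrow> leg t u = leg t v \<Longrightarrow> dep t u = dep t v \<Longrightarrow> u = v"
  by (metis vert_decomp)

lemma sd_self[simp]: "sd t u u = 0" by (simp add: sd_def)
lemma sd_sym: "sd t u v = sd t v u" by (auto simp: sd_def)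
lemma sd_0[simp]: "sd t 0 v = dep t v" "sd t v 0 = dep t v" by (auto simp: sd_def)

lemma sd_eq_0: "0 < t \<Longrightarrow> sd t u v = 0 \<Longrightarrow> u = v"
  using dep_bounds[of t u] dep_bounds[of t v]
  by (auto simp: sd_def dep_eq_0 split: if_splits intro: vert_inj)

lemma sd_tri: "sd t u w \<le> sd t u v + sd t v w"
  by (auto simp: sd_def)

lemma sd_dep: "dep t y \<le> sd t x y + dep t x"
  using sd_tri[of t 0 y x] by (simp add: sd_sym)

lemma sd_generic: "leg t c \<noteq> leg t x \<or> c = 0 \<or> x = 0 \<Longrightarrow> sd t c x = dep t c + dep t x"
  by (auto simp: sd_def)

lemma inV_leg: "0 < t \<Longrightarrow> v < t^2+1 \<Longrightarrow> v \<noteq> 0 \<Longrightarrow> leg t v < t"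
proof -
  assume a: "0 < t" "v < t^2+1" "v \<noteq> 0"
  have "v - 1 < t * t" using a by (simp add: power2_eq_square)
  then show ?thesis unfolding leg_def using a by (simp add: div_less_iff_less_mult)
qed

lemma mk_inV: "(L::nat) < t \<Longrightarrow> 1 \<le> d \<Longrightarrow> d \<le> t \<Longrightarrow> L * t + d < t^2+1"
proof -
  assume a: "L < t" "1 \<le> d" "d \<le> t"
  have "L * t + d \<le> (t - 1) * t + t" using a by (intro add_mono mult_right_mono) auto
  also have "\<dots> = t * t" using a by (cases t) auto
  finally show ?thesis by (simp add: power2_eq_square)
qed

lemma walk_single[simp]: "walk E [x]" by (simp add: walk_def)

lemma walk_Cons2: "walk E (x # y # ys) \<longleftrightarrow> E x y \<and> walk E (y # ys)"
  unfolding walk_def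
proof safe
  fix i assume h: "\<forall>i. Suc i < length (x # y # ys) \<longrightarrow> E ((x # y # ys) ! i) ((x # y # ys) ! Suc i)"
    "Suc i < length (y # ys)"
  then show "E ((y # ys) ! i) ((y # ys) ! Suc i)" using h(1)[rule_format, of "Suc i"] by simp
next
  assume "\<forall>i. Suc i < length (x # y # ys) \<longrightarrow> E ((x # y # ys) ! i) ((x # y # ys) ! Suc i)"
  then show "E x y" by force
next
  fix i assume h: "E x y" "\<forall>i. Suc i < length (y # ys) \<longrightarrow> E ((y # ys) ! i) ((y # ys) ! Suc i)"
    "Suc i < length (x # y # ys)"
  then show "E ((x # y # ys) ! i) ((x # y # ys) ! Suc i)" by (cases i) auto
qed

lemma walk_Cons: "xs \<noteq> [] \<Longrightarrow> walk E (x # xs) \<longleftrightarrow> E x (hd xs) \<and> walk E xs"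
  by (cases xs) (auto simp: walk_Cons2)

lemma walk_lower: "walk (spE t) xs \<Longrightarrow> sd t (hd xs) (last xs) \<le> length xs - 1"
proof (induction xs)
  case Nil then show ?case by (simp add: walk_def)
next
  case (Cons x xs)
  show ?case
  proof (cases "xs = []")
    case True then show ?thesis by simp
  next
    case False
    then have w1: "spE t x (hd xs)" and w2: "walk (spE t) xs" using Cons.prems walk_Cons[OF False] by auto
    have "sd t (hd xs) (last xs) \<le> length xs - 1" using Cons.IH w2 by blast
    moreover have "sd t x (hd xs) = 1" using w1 by (simp add: spE_def)
    moreover have "sd t x (last xs) \<le> sd t x (hd xs) + sd t (hd xs) (last xs)" by (rule sd_tri)
    ultimately show ?thesis using False by (cases xs) auto
  qed
qed

lemma neighbor_step:
  assumes t: "0 < t" and u: "u < t^2+1" and v: "v < t^2+1" and uv: "u \<noteq> v"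
  shows "\<exists>w. spE t u w \<and> sd t w v + 1 = sd t u v"
proof (cases "u = 0")
  case True
  then have v0: "v \<noteq> 0" using uv by simp
  define w where "w = leg t v * t + 1"
  have lv: "leg t v < t" using inV_leg[OF t v v0] .
  have lw: "leg t w = leg t v" using t unfolding w_def by (intro leg_mk) auto
  have dw: "dep t w = 1" using t unfolding w_def by (intro dep_mk) auto
  have w0: "w \<noteq> 0" unfolding w_def by simp
  have wV: "w < t^2+1" unfolding w_def using lv t by (intro mk_inV) auto
  have "sd t w v = dep t v - 1" using lw dw w0 v0 dep_bounds[OF t v0] by (simp add: sd_def)
  then show ?thesis using True wV dw dep_bounds[OF t v0] by (intro exI[of _ w]) (auto simp: spE_def)
next
  case False
  note u0 = False
  have lu: "leg t u < t" using inV_leg[OF t u u0] .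
  have du: "1 \<le> dep t u" "dep t u \<le> t" using dep_bounds[OF t u0] by auto
  have ueq: "u = leg t u * t + dep t u" using vert_decomp[OF u0] .
  show ?thesis
  proof (cases "v = 0 \<or> leg t u \<noteq> leg t v \<or> dep t v < dep t u")
    case True
    show ?thesis
    proof (cases "dep t u = 1")
      case True
      have "sd t u 0 = 1" using True by simp
      moreover have "sd t 0 v + 1 = sd t u v"
        using \<open>v = 0 \<or> leg t u \<noteq> leg t v \<or> dep t v < dep t u\<close> True u0 dep_eq_0[of t v]
        by (auto simp: sd_def)
      ultimately show ?thesis using u by (intro exI[of _ 0]) (auto simp: spE_def)
    next
      case False
      define w where "w = leg t u * t + (dep t u - 1)"
      have lw: "leg t w = leg t u" using du False unfolding w_def by (intro leg_mk) auto
      have dw: "dep t w = dep t u - 1" using du False unfolding w_def by (intro dep_mk) auto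
      have w0: "w \<noteq> 0" unfolding w_def using du False by simp
      have wV: "w < t^2+1" unfolding w_def using lu du False by (intro mk_inV) auto
      have "sd t u w = 1" using lw dw w0 u0 du False by (simp add: sd_def)
      moreover have "sd t w v + 1 = sd t u v"
        using \<open>v = 0 \<or> leg t u \<noteq> leg t v \<or> dep t v < dep t u\<close> lw dw w0 u0 du False
        by (auto simp: sd_def)
      ultimately show ?thesis using u wV by (intro exI[of _ w]) (auto simp: spE_def)
    qed
  next
    case False
    then have v0: "v \<noteq> 0" and ll: "leg t u = leg t v" and dd: "dep t u \<le> dep t v" by auto
    have dne: "dep t u \<noteq> dep t v" using vert_inj[OF u0 v0 ll] uv by auto
    have dv: "dep t v \<le> t" using dep_bounds[OF t v0] by auto
    define w where "w = leg t u * t + (dep t u + 1)"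
    have lw: "leg t w = leg t u" using du dd dne dv unfolding w_def by (intro leg_mk) auto
    have dw: "dep t w = dep t u + 1" using du dd dne dv unfolding w_def by (intro dep_mk) auto
    have w0: "w \<noteq> 0" unfolding w_def by simp
    have wV: "w < t^2+1" unfolding w_def using lu du dd dne dv by (intro mk_inV) auto
    have "sd t u w = 1" using lw dw w0 u0 by (simp add: sd_def)
    moreover have "sd t w v + 1 = sd t u v" using lw dw w0 u0 v0 ll dd dne by (auto simp: sd_def)
    ultimately show ?thesis using u wV by (intro exI[of _ w]) (auto simp: spE_def)
  qed
qed

lemma walk_exists:
  assumes t: "0 < t"
  shows "u < t^2+1 \<Longrightarrow> v < t^2+1 \<Longrightarrow> \<exists>xs. walk (spE t) xs \<and> hd xs = u \<and> last xs = v \<and> length xs = Suc (sd t u v)"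
proof (induction "sd t u v" arbitrary: u)
  case 0
  then have "u = v" using sd_eq_0[OF t] by metis
  then show ?case using 0 by (intro exI[of _ "[u]"]) auto
next
  case (Suc n)
  then have "u \<noteq> v" by (metis sd_self nat.distinct(1))
  then obtain w where w: "spE t u w" "sd t w v + 1 = sd t u v" using neighbor_step[OF t Suc.prems] by blast
  then have "sd t w v = n" "w < t^2+1" using Suc.hyps(2) by (auto simp: spE_def)
  then obtain xs where xs: "walk (spE t) xs" "hd xs = w" "last xs = v" "length xs = Suc n"
    using Suc.hyps(1) Suc.prems by metis
  then have "xs \<noteq> []" by auto
  then show ?case using xs w Suc.hyps(2) by (intro exI[of _ "u # xs"]) (auto simp: walk_Cons)
qed

lemma gdist_sd:
  assumes t: "0 < t" and u: "u < t^2+1" and v: "v < t^2+1"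
  shows "gdist (spE t) u v = sd t u v"
  unfolding gdist_def
proof (rule Least_equality)
  show "\<exists>xs. walk (spE t) xs \<and> hd xs = u \<and> last xs = v \<and> length xs = Suc (sd t u v)"
    using walk_exists[OF t u v] .
next
  fix k assume "\<exists>xs. walk (spE t) xs \<and> hd xs = u \<and> last xs = v \<and> length xs = Suc k"
  then obtain xs where "walk (spE t) xs" "hd xs = u" "last xs = v" "length xs = Suc k" by blast
  then show "sd t u v \<le> k" using walk_lower[of t xs] by simp
qed

lemma spE_sym: "spE t u v \<Longrightarrow> spE t v u" by (auto simp: spE_def sd_sym)

lemma spE_dep: "spE t x y \<Longrightarrow> dep t y = dep t x + 1 \<or> dep t x = dep t y + 1"
  unfolding spE_def sd_def by (auto split: if_splits; arith)

lemma spE_parent_unique: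
  assumes t: "0 < t" and xy: "spE t x y" and xz: "spE t x z"
    and dy: "dep t y + 1 = dep t x" and dz: "dep t z + 1 = dep t x"
  shows "y = z"
proof (cases "dep t x = 1")
  case True
  then have "y = 0" "z = 0" using dy dz dep_eq_0 by auto
  then show ?thesis by simp
next
  case False
  have "dep t x \<noteq> 0" using dy by simp
  then have x0: "x \<noteq> 0" by (metis dep_0)
  have y0: "y \<noteq> 0" using False dy by (metis dep_0 add_0)
  have z0: "z \<noteq> 0" using False dz by (metis dep_0 add_0)
  have "leg t x = leg t y" using xy x0 y0 dy False by (auto simp: spE_def sd_def split: if_splits)
  moreover have "leg t x = leg t z" using xz x0 z0 dz False by (auto simp: spE_def sd_def split: if_splits)
  ultimately show ?thesis using vert_inj[OF y0 z0, of t] dy dz by auto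
qed

lemma walk_nth: "walk E xs \<Longrightarrow> Suc i < length xs \<Longrightarrow> E (xs ! i) (xs ! Suc i)"
  by (simp add: walk_def)

lemma no_cycle:
  assumes t: "0 < t"
  shows "\<not> has_cycle (spE t)"
proof
  assume "has_cycle (spE t)"
  then obtain xs where w: "walk (spE t) xs" and dis: "distinct xs" and len: "length xs \<ge> 3"
    and cl: "spE t (last xs) (hd xs)" unfolding has_cycle_def by blast
  define n where "n = length xs"
  have n3: "n \<ge> 3" using len n_def by simp
  define D where "D = Max (dep t ` set xs)"
  have ne: "set xs \<noteq> {}" using n3 n_def by auto
  have "D \<in> dep t ` set xs" unfolding D_def using ne by (intro Max_in) auto
  then obtain x where x: "x \<in> set xs" "dep t x = D" by blast
  then obtain i where i: "i < n" "xs ! i = x" using n_def by (metis in_set_conv_nth)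
  have maxD: "\<And>j. j < n \<Longrightarrow> dep t (xs ! j) \<le> D" unfolding D_def n_def by (intro Max_ge) auto
  have hd: "hd xs = xs ! 0" using ne by (simp add: hd_conv_nth)
  have lst: "last xs = xs ! (n - 1)" using ne n_def by (simp add: last_conv_nth)
  define p where "p = (if i = 0 then n - 1 else i - 1)"
  define q where "q = (if i = n - 1 then 0 else i + 1)"
  have p: "p < n" "spE t (xs ! p) x" unfolding p_def using i cl hd lst w walk_nth[of "spE t" xs "i - 1"] n_def
    by auto
  have q: "q < n" "spE t x (xs ! q)" unfolding q_def using i cl hd lst w walk_nth[of "spE t" xs i] n_def
    by auto
  have pq: "p \<noteq> q" unfolding p_def q_def using i n3 by auto
  have dp: "dep t (xs ! p) + 1 = D"
    using spE_dep[OF spE_sym[OF p(2)]] maxD[OF p(1)] x by auto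
  have dq: "dep t (xs ! q) + 1 = D"
    using spE_dep[OF q(2)] maxD[OF q(1)] x by auto
  have "xs ! p = xs ! q" using spE_parent_unique[OF t spE_sym[OF p(2)] q(2)] dp dq x by auto
  then show False using dis pq p(1) q(1) n_def by (simp add: nth_eq_iff_index_eq)
qed

lemma spider_tree:
  assumes t: "0 < t"
  shows "is_tree {..<t^2+1} (spE t)"
  unfolding is_tree_def simple_graph_def connected_graph_def
proof (intro conjI allI impI ballI)
  show "finite {..<t^2+1}" by simp
  show "{..<t^2+1} \<noteq> {}" by auto
  show "\<not> has_cycle (spE t)" using no_cycle[OF t] .
next
  fix u v assume "spE t u v"
  then show "u \<in> {..<t^2+1}" "v \<in> {..<t^2+1}" "u \<noteq> v" "spE t v u"
    by (auto simp: spE_def sd_sym)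
next
  fix u v assume "u \<in> {..<t^2+1}" "v \<in> {..<t^2+1}"
  then show "\<exists>xs. walk (spE t) xs \<and> hd xs = u \<and> last xs = v"
    using walk_exists[OF t] by auto
qed



definition kd :: "nat \<Rightarrow> int" where "kd s = (if s = 0 then 0 else 1)"
definition stp :: "nat \<Rightarrow> int \<Rightarrow> nat" where
  "stp s e = (if s = 0 then (if e = 0 then 1 else 0) else if e = -1 \<and> s < 3 then s + 1 else 0)"
definition psi :: "nat \<Rightarrow> int" where
  "psi s = (if s = 0 then 0 else if s = 1 then 1 else if s = 2 then 0 else -1)"
definition dpr :: "int \<Rightarrow> int \<Rightarrow> int" where
  "dpr d e = (if d \<le> e then min 1 e else 1)"

lemma step_facts:
  fixes e :: int
  assumes "s \<le> 3"
  defines "s' \<equiv> stp s e"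
  defines "d \<equiv> kd s' - kd s"
  shows "0 \<le> dpr d e - d" "dpr d e - d \<le> 2" "-1 \<le> dpr d e" "dpr d e \<le> 1"
    "(dpr d e \<le> e) = (d \<le> e)" "2 * (dpr d e - d) + psi s' - psi s \<ge> 1" "s' \<le> 3"
  using assms(1) unfolding s'_def d_def
  by (auto simp: stp_def kd_def dpr_def psi_def)

lemma psi_le1: "psi s \<le> 1" by (simp add: psi_def)
lemma kd_ge0: "0 \<le> kd s" and kd_le1: "kd s \<le> 1" by (auto simp: kd_def)

lemma avoid_leg: "finite X \<Longrightarrow> card X < (t::nat) \<Longrightarrow> \<exists>L<t. L \<notin> X"
proof (rule ccontr)
  assume a: "finite X" "card X < t" "\<not> (\<exists>L<t. L \<notin> X)"
  then have "{..<t} \<subseteq> X" by auto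
  then have "card {..<t} \<le> card X" using a(1) by (rule card_mono[rotated])
  then show False using a(2) by simp
qed

definition vx :: "nat \<Rightarrow> nat \<Rightarrow> nat \<Rightarrow> nat" where
  "vx t L d = (if d = 0 then 0 else L * t + d)"

lemma vx_facts:
  assumes t: "0 < t" and L: "L < t" and d: "d \<le> t"
  shows "vx t L d < t^2+1" "dep t (vx t L d) = d" "d \<noteq> 0 \<Longrightarrow> leg t (vx t L d) = L"
    "vx t L d = 0 \<longleftrightarrow> d = 0"
proof -
  show "vx t L d < t^2+1"
  proof (cases "d = 0")
    case False then show ?thesis using mk_inV[OF L, of d] d by (simp add: vx_def)
  qed (simp add: vx_def)
qed (use assms in \<open>auto simp: vx_def intro!: leg_mk dep_mk\<close>)

lemma vx_adj:
  assumes t: "0 < t" and L: "L < t" and d1: "d1 \<le> t" and d2: "d2 \<le> t"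
    and c: "d1 \<le> d2 + 1" "d2 \<le> d1 + 1"
  shows "vx t L d1 = vx t L d2 \<or> spE t (vx t L d1) (vx t L d2)"
proof (cases "d1 = d2")
  case True then show ?thesis by simp
next
  case False
  have "sd t (vx t L d1) (vx t L d2) = 1"
    using vx_facts[OF t L d1] vx_facts[OF t L d2] c False
    by (auto simp: sd_def)
  then show ?thesis using vx_facts(1)[OF t L d1] vx_facts(1)[OF t L d2] by (simp add: spE_def)
qed



locale game =
  fixes t q c1 c2 :: nat and f :: "bool list \<Rightarrow> nat"
  assumes tq: "t = 12 * q" and q1: "1 \<le> q" and cs: "cat_strategy {..<t^2+1} c1 c2 f"
begin

lemma t_pos: "0 < t" using tq q1 by simp

fun pr :: "nat \<Rightarrow> nat \<times> bool list" where
  "pr 0 = (0, [])"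
| "pr (Suc 0) = (0, [])"
| "pr (Suc (Suc k)) =
    (let s1 = fst (pr (Suc k)); B1 = snd (pr (Suc k)); B0 = snd (pr k);
         a1 = int (dep t (cat_pos c1 c2 f B0 (Suc k)));
         a2 = int (dep t (cat_pos c1 c2 f B1 (Suc (Suc k))));
         s2 = stp s1 (a1 - a2)
     in (s2, B1 @ [a2 + kd s2 \<le> a1 + kd s1]))"

definition B :: "nat \<Rightarrow> bool list" where "B i = snd (pr i)"
definition st :: "nat \<Rightarrow> nat" where "st i = fst (pr i)"
definition Cp :: "nat \<Rightarrow> nat" where "Cp i = cat_pos c1 c2 f (B (i - 1)) i"
definition a :: "nat \<Rightarrow> int" where "a i = int (dep t (Cp i))"

lemma st_01[simp]: "st 0 = 0" "st (Suc 0) = 0" "B 0 = []" "B (Suc 0) = []"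
  by (simp_all add: st_def B_def)

lemma rec_SS:
  "st (Suc (Suc k)) = stp (st (Suc k)) (a (Suc k) - a (Suc (Suc k)))"
  "B (Suc (Suc k)) = B (Suc k) @ [a (Suc (Suc k)) + kd (st (Suc (Suc k))) \<le> a (Suc k) + kd (st (Suc k))]"
  by (simp_all add: st_def B_def a_def Cp_def Let_def)

lemma rec_Suc: "1 \<le> i \<Longrightarrow> st (Suc i) = stp (st i) (a i - a (Suc i))"
  using rec_SS(1)[of "i - 1"] by (cases i) auto

lemma len_B: "length (B i) = i - 1"
proof (induction i rule: nat_less_induct)
  case (1 n)
  show ?case
  proof (cases n)
    case (Suc m)
    show ?thesis
    proof (cases m)
      case (Suc k)
      then show ?thesis using 1 \<open>n = Suc m\<close> rec_SS(2)[of k] by auto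
    qed (use \<open>n = Suc m\<close> in simp)
  qed simp
qed

lemma Cp_V: "Cp i < t^2+1"
proof -
  have "c1 \<in> {..<t^2+1}" "c2 \<in> {..<t^2+1}" "\<And>bs. bs \<noteq> [] \<Longrightarrow> f bs \<in> {..<t^2+1}"
    using cs by (auto simp: cat_strategy_def)
  moreover have "i \<ge> 3 \<Longrightarrow> B (i - 1) \<noteq> []" using len_B[of "i - 1"] by auto
  ultimately show ?thesis unfolding Cp_def cat_pos_def by auto
qed

lemma st_le3: "st i \<le> 3"
proof (cases "i \<le> 1")
  case True then show ?thesis by (cases i) auto
next
  case False
  then have i: "i = Suc (Suc (i - 2))" by simp
  have "st (Suc (Suc (i - 2))) \<le> 3" unfolding rec_SS(1) stp_def by simp
  then show ?thesis using i by metis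
qed

lemma st_ge2: "st i \<noteq> 0 \<Longrightarrow> i = Suc (Suc (i - 2))"
proof -
  assume h: "st i \<noteq> 0"
  have "i \<noteq> 0" using h st_01(1) by metis
  moreover have "i \<noteq> 1" using h st_01(2) One_nat_def by metis
  ultimately show ?thesis by simp
qed

lemma st_back: "st i = Suc r \<Longrightarrow> Suc r < i \<and> st (i - Suc r) = 0"
proof (induction r arbitrary: i)
  case 0
  define k where "k = i - 2"
  have i: "i = Suc (Suc k)" using st_ge2[of i] 0 k_def by simp
  have "stp (st (Suc k)) (a (Suc k) - a (Suc (Suc k))) = 1" using 0 i rec_SS(1)[of k] by simp
  then have "st (Suc k) = 0" unfolding stp_def by (auto split: if_splits)
  then show ?case using i by simp
next
  case (Suc r)
  define k where "k = i - 2"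
  have i: "i = Suc (Suc k)" using st_ge2[of i] Suc.prems k_def by simp
  have "stp (st (Suc k)) (a (Suc k) - a (Suc (Suc k))) = Suc (Suc r)" using Suc.prems i rec_SS(1)[of k] by simp
  then have "st (Suc k) = Suc r" unfolding stp_def by (auto split: if_splits)
  then show ?case using Suc.IH[of "Suc k"] i by auto
qed

definition mleg :: "nat \<Rightarrow> nat" where
  "mleg j = (LEAST L. L < t \<and> L \<notin> {leg t (Cp j), leg t (Cp (Suc j)), leg t (Cp (Suc (Suc j)))})"

lemma mleg_prop: "mleg j < t \<and> mleg j \<notin> {leg t (Cp j), leg t (Cp (Suc j)), leg t (Cp (Suc (Suc j)))}"
proof -
  let ?X = "{leg t (Cp j), leg t (Cp (Suc j)), leg t (Cp (Suc (Suc j)))}"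
  have "card (set [leg t (Cp j), leg t (Cp (Suc j)), leg t (Cp (Suc (Suc j)))]) \<le> 3"
    using card_length[of "[leg t (Cp j), leg t (Cp (Suc j)), leg t (Cp (Suc (Suc j)))]"] by simp
  then have "card ?X \<le> 3" by simp
  then have "card ?X < t" using tq q1 by simp
  then obtain L where "L < t \<and> L \<notin> ?X" using avoid_leg[of ?X t] by auto
  then show ?thesis unfolding mleg_def by (rule LeastI)
qed

definition mouse :: "nat \<Rightarrow> nat" where
  "mouse i = (if st i = 0 then 0 else mleg (i + 1 - st i) * t + 1)"

lemma mouse_V: "mouse i < t^2+1"
  using mk_inV[of "mleg (i + 1 - st i)" t 1] mleg_prop[of "i + 1 - st i"] t_pos
  by (auto simp: mouse_def)

lemma mouse_dep: "int (dep t (mouse i)) = kd (st i)"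
  using dep_mk[of 1 t "mleg (i + 1 - st i)"] t_pos by (auto simp: mouse_def kd_def)

lemma mouse_gen: "int (gdist (spE t) (Cp i) (mouse i)) = a i + kd (st i)"
proof -
  have g: "gdist (spE t) (Cp i) (mouse i) = sd t (Cp i) (mouse i)"
    using gdist_sd[OF t_pos Cp_V mouse_V] .
  show ?thesis
  proof (cases "st i = 0")
    case True then show ?thesis using g by (simp add: mouse_def a_def kd_def)
  next
    case False
    then obtain r where r: "st i = Suc r" by (cases "st i") auto
    have "Suc r < i" using st_back[OF r] by simp
    have r3: "r \<le> 2" using st_le3[of i] r by simp
    define j where "j = i + 1 - st i"
    have ij: "i = j \<or> i = Suc j \<or> i = Suc (Suc j)" using r r3 \<open>Suc r < i\<close> unfolding j_def by auto
    have mi: "mouse i = mleg j * t + 1" using False by (simp add: mouse_def j_def)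
    have lm: "leg t (mouse i) = mleg j" unfolding mi using t_pos by (intro leg_mk) auto
    have "leg t (Cp i) \<noteq> leg t (mouse i)" using mleg_prop[of j] ij lm by auto
    then have "sd t (Cp i) (mouse i) = dep t (Cp i) + dep t (mouse i)" by (rule sd_generic[OF disjI1])
    then show ?thesis using g mouse_dep[of i] by (simp add: a_def)
  qed
qed

lemma answers_eq: "answers (spE t) c1 c2 f mouse i = B i"
proof -
  have "answers (spE t) c1 c2 f mouse i = B i \<and> answers (spE t) c1 c2 f mouse (Suc i) = B (Suc i)"
  proof (induction i)
    case 0 then show ?case by simp
  next
    case (Suc i)
    have e1: "cat_pos c1 c2 f (B (Suc i)) (Suc (Suc i)) = Cp (Suc (Suc i))" by (simp add: Cp_def)
    have e2: "cat_pos c1 c2 f (B i) (Suc i) = Cp (Suc i)" by (simp add: Cp_def)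
    have "(gdist (spE t) (Cp (Suc (Suc i))) (mouse (Suc (Suc i))) \<le> gdist (spE t) (Cp (Suc i)) (mouse (Suc i)))
       = (a (Suc (Suc i)) + kd (st (Suc (Suc i))) \<le> a (Suc i) + kd (st (Suc i)))"
      using mouse_gen[of "Suc (Suc i)"] mouse_gen[of "Suc i"] by linarith
    then show ?case using Suc e1 e2 by (simp add: rec_SS(2))
  qed
  then show ?thesis by simp
qed

lemma cat_seq_eq: "cat_seq (spE t) c1 c2 f mouse i = Cp i"
  by (simp add: cat_seq_def answers_eq Cp_def)

lemma bit_seq_eq: "bit_seq (spE t) c1 c2 f mouse i \<longleftrightarrow>
   int (gdist (spE t) (Cp i) (mouse i)) \<le> int (gdist (spE t) (Cp (i - 1)) (mouse (i - 1)))"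
  by (simp add: bit_seq_def cat_seq_eq)

lemma mouse_step: "1 \<le> i \<Longrightarrow> mouse (Suc i) = mouse i \<or> spE t (mouse i) (mouse (Suc i))"
proof -
  assume i: "1 \<le> i"
  have S: "st (Suc i) = stp (st i) (a i - a (Suc i))" using rec_Suc[OF i] .
  have V: "mouse i < t^2+1" "mouse (Suc i) < t^2+1" using mouse_V by auto
  show ?thesis
  proof (cases "st i = 0")
    case True
    show ?thesis
    proof (cases "st (Suc i) = 0")
      case True then show ?thesis using \<open>st i = 0\<close> by (simp add: mouse_def)
    next
      case False
      then have "st (Suc i) = 1" using S True by (simp add: stp_def split: if_splits)
      then have "sd t (mouse i) (mouse (Suc i)) = 1"
        using \<open>st i = 0\<close> t_pos mouse_dep[of "Suc i"] by (simp add: mouse_def kd_def)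
      then show ?thesis using V by (simp add: spE_def)
    qed
  next
    case False
    show ?thesis
    proof (cases "st (Suc i) = 0")
      case True
      then have "sd t (mouse i) (mouse (Suc i)) = 1"
        using False mouse_dep[of i] by (simp add: mouse_def kd_def)
      then show ?thesis using V by (simp add: spE_def)
    next
      case True2: False
      then have "st (Suc i) = Suc (st i)" using S False by (simp add: stp_def split: if_splits)
      then show ?thesis using False by (simp add: mouse_def)
    qed
  qed
qed

lemma mouse_step2: "2 \<le> jj \<Longrightarrow> mouse jj = mouse (jj - 1) \<or> spE t (mouse (jj - 1)) (mouse jj)"
proof -
  assume h: "2 \<le> jj"
  then have "1 \<le> jj - 1" by arith
  moreover have "Suc (jj - 1) = jj" using h by arith
  ultimately show ?thesis using mouse_step[of "jj - 1"] by metis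
qed

lemma mouse_seq_ok: "mouse_seq {..<t^2+1} (spE t) mouse"
  unfolding mouse_seq_def using mouse_V mouse_step by auto

definition KK :: int where "KK = int (2 * q + 1)"
definition gn :: "nat \<Rightarrow> int" where
  "gn i = dpr (kd (st i) - kd (st (i - 1))) (a (i - 1) - a i) - (kd (st i) - kd (st (i - 1)))"

lemma gn_facts:
  assumes i: "2 \<le> i"
  shows "0 \<le> gn i" "gn i \<le> 2" "2 * gn i + psi (st i) - psi (st (i - 1)) \<ge> 1"
    "-1 \<le> dpr (kd (st i) - kd (st (i - 1))) (a (i - 1) - a i)"
    "dpr (kd (st i) - kd (st (i - 1))) (a (i - 1) - a i) \<le> 1"
    "(dpr (kd (st i) - kd (st (i - 1))) (a (i - 1) - a i) \<le> a (i - 1) - a i) =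
     (kd (st i) - kd (st (i - 1)) \<le> a (i - 1) - a i)"
proof -
  have i1: "1 \<le> i - 1" using i by simp
  have S: "st i = stp (st (i - 1)) (a (i - 1) - a i)" using rec_Suc[OF i1] i by simp
  note F = step_facts[OF st_le3[of "i - 1"], of "a (i - 1) - a i", folded S]
  show "0 \<le> gn i" "gn i \<le> 2" "2 * gn i + psi (st i) - psi (st (i - 1)) \<ge> 1"
    "-1 \<le> dpr (kd (st i) - kd (st (i - 1))) (a (i - 1) - a i)"
    "dpr (kd (st i) - kd (st (i - 1))) (a (i - 1) - a i) \<le> 1"
    "(dpr (kd (st i) - kd (st (i - 1))) (a (i - 1) - a i) \<le> a (i - 1) - a i) =
     (kd (st i) - kd (st (i - 1)) \<le> a (i - 1) - a i)"
    using F unfolding gn_def by auto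
qed

fun off :: "nat \<Rightarrow> int \<Rightarrow> nat \<Rightarrow> int" where
  "off s o0 0 = o0"
| "off s o0 (Suc i) = (if Suc i \<le> s then o0 else if KK \<le> off s o0 i then off s o0 i
                       else off s o0 i + gn (Suc i))"

lemma off_ge: "1 \<le> s \<Longrightarrow> o0 \<le> off s o0 i"
proof (induction i)
  case (Suc i)
  then show ?case using gn_facts(1)[of "Suc i"] by auto
qed simp

lemma off_le: "1 \<le> s \<Longrightarrow> off s o0 i \<le> max o0 (KK + 1)"
proof (induction i)
  case (Suc i)
  then show ?case using gn_facts(2)[of "Suc i"] by auto
qed simp

lemma off_early: "i \<le> s \<Longrightarrow> off s o0 i = o0"
  by (cases i) auto

lemma off_inc: "s < i \<Longrightarrow> off s o0 i = off s o0 (i - 1) \<or> off s o0 i = off s o0 (i - 1) + gn i"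
  by (cases i) auto

lemma potential:
  assumes s1: "1 \<le> s"
  shows "s \<le> j \<Longrightarrow> KK \<le> off s o0 j \<or> 2 * (off s o0 j - o0) \<ge> int (j - s) + psi (st s) - psi (st j)"
proof (induction j)
  case 0 then show ?case using s1 by simp
next
  case (Suc j)
  show ?case
  proof (cases "Suc j = s")
    case True then show ?thesis using off_early[of "Suc j" s o0] by simp
  next
    case False
    then have sj: "s \<le> j" using Suc.prems by simp
    show ?thesis
    proof (cases "KK \<le> off s o0 j")
      case True then show ?thesis using sj by simp
    next
      case False
      then have o: "off s o0 (Suc j) = off s o0 j + gn (Suc j)" using sj by simp
      have "2 * gn (Suc j) + psi (st (Suc j)) - psi (st j) \<ge> 1" using gn_facts(3)[of "Suc j"] s1 sj by simp
      then show ?thesis using Suc.IH[OF sj] False o sj by (simp add: of_nat_diff)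
    qed
  qed
qed

definition cdep :: "nat \<Rightarrow> int \<Rightarrow> nat \<Rightarrow> int" where
  "cdep s o0 i = kd (st i) + off s o0 i"

lemma cand_step:
  assumes s1: "1 \<le> s" and si: "s < i"
  shows "-1 \<le> cdep s o0 i - cdep s o0 (i - 1)" "cdep s o0 i - cdep s o0 (i - 1) \<le> 1"
    "(cdep s o0 i - cdep s o0 (i - 1) \<le> a (i - 1) - a i) =
     (kd (st i) - kd (st (i - 1)) \<le> a (i - 1) - a i)"
proof -
  have i2: "2 \<le> i" using s1 si by simp
  note G = gn_facts[OF i2]
  have kb: "0 \<le> kd (st i)" "kd (st i) \<le> 1" "0 \<le> kd (st (i - 1))" "kd (st (i - 1)) \<le> 1"
    by (auto simp: kd_def)
  have "off s o0 i = off s o0 (i - 1) \<or> off s o0 i = off s o0 (i - 1) + gn i" using off_inc[OF si] .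
  then show "-1 \<le> cdep s o0 i - cdep s o0 (i - 1)" "cdep s o0 i - cdep s o0 (i - 1) \<le> 1"
    "(cdep s o0 i - cdep s o0 (i - 1) \<le> a (i - 1) - a i) =
     (kd (st i) - kd (st (i - 1)) \<le> a (i - 1) - a i)"
    using G kb unfolding cdep_def gn_def by auto
qed

definition cv :: "nat \<Rightarrow> int \<Rightarrow> nat \<Rightarrow> nat \<Rightarrow> nat" where
  "cv s o0 L i = (if i < s then mouse i else vx t L (nat (cdep s o0 i)))"

lemma KK_t: "0 \<le> KK" "KK + 2 \<le> int t" using tq q1 by (auto simp: KK_def)

lemma cand_in_M:
  assumes s1: "1 \<le> s" and sj: "s \<le> j" and st0: "st s = 0" and o: "(s = 1 \<and> o0 = KK) \<or> o0 = 0"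
    and L: "L < t" and legs: "\<forall>i \<in> {s..j}. leg t (Cp i) \<noteq> L"
  shows "cv s o0 L j \<in> Mset {..<t^2+1} (spE t) c1 c2 f mouse j"
    and "int (sd t (mouse j) (cv s o0 L j)) \<ge> off s o0 j"
proof -
  have o0: "0 \<le> o0" "o0 \<le> KK" using o KK_t by auto
  have cb: "\<And>i. 0 \<le> cdep s o0 i \<and> cdep s o0 i \<le> int t"
  proof -
    fix i
    have "o0 \<le> off s o0 i" "off s o0 i \<le> max o0 (KK + 1)" using off_ge[OF s1] off_le[OF s1] by auto
    then show "0 \<le> cdep s o0 i \<and> cdep s o0 i \<le> int t" using o0 KK_t kd_ge0[of "st i"] kd_le1[of "st i"]
      unfolding cdep_def by auto
  qed
  have cbn: "\<And>i. nat (cdep s o0 i) \<le> t" using cb by (simp add: nat_le_iff)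
  have late: "\<And>i. s \<le> i \<Longrightarrow> cv s o0 L i = vx t L (nat (cdep s o0 i))" by (simp add: cv_def)
  have cvV: "\<And>i. cv s o0 L i < t^2+1"
    using mouse_V vx_facts(1)[OF t_pos L cbn] by (simp add: cv_def)
  have cvdep: "\<And>i. s \<le> i \<Longrightarrow> int (dep t (cv s o0 L i)) = cdep s o0 i"
    using late vx_facts(2)[OF t_pos L cbn] cb by simp
  have cvgen: "\<And>i. s \<le> i \<Longrightarrow> i \<le> j \<Longrightarrow> int (gdist (spE t) (Cp i) (cv s o0 L i)) = a i + cdep s o0 i"
  proof -
    fix i assume i: "s \<le> i" "i \<le> j"
    have "leg t (Cp i) \<noteq> leg t (cv s o0 L i) \<or> Cp i = 0 \<or> cv s o0 L i = 0"
    proof (cases "nat (cdep s o0 i) = 0")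
      case True then show ?thesis using late[OF i(1)] by (simp add: vx_def)
    next
      case False
      then have "leg t (cv s o0 L i) = L" using late[OF i(1)] vx_facts(3)[OF t_pos L cbn] by simp
      then show ?thesis using legs i by auto
    qed
    then have "sd t (Cp i) (cv s o0 L i) = dep t (Cp i) + dep t (cv s o0 L i)" by (rule sd_generic)
    then show "int (gdist (spE t) (Cp i) (cv s o0 L i)) = a i + cdep s o0 i"
      using gdist_sd[OF t_pos Cp_V cvV] cvdep[OF i(1)] by (simp add: a_def)
  qed
  have cv_s: "2 \<le> s \<Longrightarrow> cv s o0 L s = mouse s"
  proof -
    assume "2 \<le> s"
    then have "o0 = 0" using o by auto
    then have "cdep s o0 s = 0" using st0 off_early[of s s o0] by (simp add: cdep_def kd_def)
    then show ?thesis using st0 by (simp add: cv_def vx_def mouse_def)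
  qed
  show "cv s o0 L j \<in> Mset {..<t^2+1} (spE t) c1 c2 f mouse j"
    unfolding Mset_def
  proof (intro CollectI exI[of _ "cv s o0 L"] conjI allI impI)
    show "cv s o0 L j = cv s o0 L j" by simp
  next
    fix jj assume "1 \<le> jj \<and> jj \<le> j"
    show "cv s o0 L jj \<in> {..<t^2+1}" using cvV by simp
  next
    fix jj assume jj: "2 \<le> jj \<and> jj \<le> j"
    show "cv s o0 L jj = cv s o0 L (jj - 1) \<or> spE t (cv s o0 L (jj - 1)) (cv s o0 L jj)"
    proof (cases "jj \<le> s")
      case True
      have "cv s o0 L jj = mouse jj" "cv s o0 L (jj - 1) = mouse (jj - 1)"
        using True jj cv_s by (auto simp: cv_def)
      moreover have "mouse jj = mouse (jj - 1) \<or> spE t (mouse (jj - 1)) (mouse jj)"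
        using mouse_step2 jj by simp
      ultimately show ?thesis by simp
    next
      case False
      then have sl: "s < jj" by simp
      note cs = cand_step[OF s1 sl, of o0]
      have "vx t L (nat (cdep s o0 (jj - 1))) = vx t L (nat (cdep s o0 jj)) \<or>
            spE t (vx t L (nat (cdep s o0 (jj - 1)))) (vx t L (nat (cdep s o0 jj)))"
        using cs cb[of jj] cb[of "jj - 1"] by (intro vx_adj[OF t_pos L cbn cbn]) auto
      then show ?thesis using late[of jj] late[of "jj - 1"] sl by auto
    qed
    show "(gdist (spE t) (cat_seq (spE t) c1 c2 f mouse jj) (cv s o0 L jj)
           \<le> gdist (spE t) (cat_seq (spE t) c1 c2 f mouse (jj - 1)) (cv s o0 L (jj - 1))) =
          bit_seq (spE t) c1 c2 f mouse jj"
    proof (cases "jj \<le> s")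
      case True
      have "cv s o0 L jj = mouse jj" "cv s o0 L (jj - 1) = mouse (jj - 1)"
        using True jj cv_s by (auto simp: cv_def)
      then show ?thesis by (simp add: bit_seq_def)
    next
      case False
      then have sl: "s < jj" by simp
      note cs = cand_step[OF s1 sl, of o0]
      have g1: "int (gdist (spE t) (Cp jj) (cv s o0 L jj)) = a jj + cdep s o0 jj"
        using cvgen[of jj] sl jj by simp
      have g2: "int (gdist (spE t) (Cp (jj - 1)) (cv s o0 L (jj - 1))) = a (jj - 1) + cdep s o0 (jj - 1)"
      proof (rule cvgen)
        show "s \<le> jj - 1" using sl by arith
        show "jj - 1 \<le> j" using jj by arith
      qed
      have "bit_seq (spE t) c1 c2 f mouse jj = (a jj + kd (st jj) \<le> a (jj - 1) + kd (st (jj - 1)))"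
        using bit_seq_eq[of jj] mouse_gen[of jj] mouse_gen[of "jj - 1"] by simp
      then show ?thesis using g1 g2 cs(3) by (simp add: cat_seq_eq) linarith
    qed
  qed
  have "int (dep t (cv s o0 L j)) \<le> int (sd t (mouse j) (cv s o0 L j)) + int (dep t (mouse j))"
    using sd_dep[of t "cv s o0 L j" "mouse j"] by linarith
  then show "int (sd t (mouse j) (cv s o0 L j)) \<ge> off s o0 j"
    using cvdep[OF sj] mouse_dep[of j] unfolding cdep_def by linarith
qed

lemma mouse_in_M: "mouse j \<in> Mset {..<t^2+1} (spE t) c1 c2 f mouse j"
  unfolding Mset_def
  by (intro CollectI exI[of _ mouse]) (use mouse_V mouse_step2 in \<open>auto simp: bit_seq_def\<close>)

lemma legs_avoid: "Suc j - s < t \<Longrightarrow> \<exists>L<t. \<forall>i\<in>{s..j}. leg t (Cp i) \<noteq> L"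
proof -
  assume h: "Suc j - s < t"
  let ?X = "(\<lambda>i. leg t (Cp i)) ` {s..j}"
  have "card ?X \<le> card {s..j}" by (rule card_image_le) simp
  then have "card ?X < t" using h by simp
  then obtain L where "L < t" "L \<notin> ?X" using avoid_leg[of ?X t] by auto
  then show ?thesis by auto
qed

lemma far_exists:
  assumes j: "1 \<le> j"
  shows "\<exists>v \<in> Mset {..<t^2+1} (spE t) c1 c2 f mouse j. KK \<le> int (sd t (mouse j) v)"
proof (cases "j \<le> 4 * q + 3")
  case True
  have "Suc j - 1 < t" using True tq q1 by simp
  then obtain L where L: "L < t" "\<forall>i\<in>{1..j}. leg t (Cp i) \<noteq> L" using legs_avoid by blast
  have o: "(1 = (1::nat) \<and> KK = KK) \<or> KK = 0" by simp
  note C = cand_in_M[OF order_refl j _ o L(1) L(2)]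
  have "KK \<le> off 1 KK j" using off_ge[of 1 KK j] by simp
  then show ?thesis using C by force
next
  case False
  define T where "T = j - (4 * q + 3)"
  have T1: "1 \<le> T" using False T_def by simp
  obtain s where s: "1 \<le> s" "s \<le> T" "T \<le> s + 3" "st s = 0"
  proof (cases "st T = 0")
    case True then show ?thesis using that[of T] T1 by simp
  next
    case False
    then obtain r where r: "st T = Suc r" by (cases "st T") auto
    have "r \<le> 2" using st_le3[of T] r by simp
    then show ?thesis using that[of "T - Suc r"] st_back[OF r] by auto
  qed
  have sj: "s \<le> j" using s T_def False by simp
  have "Suc j - s < t" using s T_def False tq q1 by simp
  then obtain L where L: "L < t" "\<forall>i\<in>{s..j}. leg t (Cp i) \<noteq> L" using legs_avoid by blast
  have o: "(s = 1 \<and> (0::int) = KK) \<or> (0::int) = 0" by simp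
  note C = cand_in_M[OF s(1) sj s(4) o L(1) L(2)]
  have P: "KK \<le> off s 0 j \<or> 2 * (off s 0 j - 0) \<ge> int (j - s) + psi (st s) - psi (st j)"
    using potential[OF s(1) sj] .
  have "int (j - s) \<ge> 4 * int q + 3" using s T_def False by simp
  then have "KK \<le> off s 0 j" using P psi_le1[of "st j"] s(4) by (auto simp: psi_def KK_def)
  then show ?thesis using C by force
qed

end

lemma rad_lower:
  assumes t: "0 < t" and W: "W \<subseteq> {..<t^2+1}" and x: "x \<in> W" and y: "y \<in> W"
  shows "sd t x y \<le> 2 * rad {..<t^2+1} (spE t) W"
proof -
  let ?g = "\<lambda>v. Max ((\<lambda>w. gdist (spE t) v w) ` W)"
  have fW: "finite W" using W finite_subset by blast
  have "rad {..<t^2+1} (spE t) W \<in> ?g ` {..<t^2+1}"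
    unfolding rad_def by (rule Min_in) auto
  then obtain v where v: "v < t^2+1" "rad {..<t^2+1} (spE t) W = ?g v" by auto
  have "gdist (spE t) v x \<le> ?g v" "gdist (spE t) v y \<le> ?g v"
    using fW x y by (auto intro: Max_ge)
  moreover have "gdist (spE t) v x = sd t v x" "gdist (spE t) v y = sd t v y"
    using gdist_sd[OF t v(1)] x y W by auto
  moreover have "sd t x y \<le> sd t x v + sd t v y" by (rule sd_tri)
  ultimately show ?thesis using v(2) sd_sym[of t x v] by linarith
qed

lemma Mset_sub: "Mset V E c1 c2 f m i \<subseteq> V" if "1 \<le> i"
  using that unfolding Mset_def by auto

theorem proposition3p1:
  fixes t :: nat
  assumes "t > 0" and "12 dvd t"
  shows "\<exists>E :: nat \<Rightarrow> nat \<Rightarrow> bool. is_tree {..<t^2+1} E \<and>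
           (\<forall>c1 c2 f. cat_strategy {..<t^2+1} c1 c2 f \<longrightarrow>
              (\<exists>m. mouse_seq {..<t^2+1} E m \<and>
                   (\<forall>i\<ge>1. real (rad {..<t^2+1} E (Mset {..<t^2+1} E c1 c2 f m i)) > real t / 12)))"
proof -
  obtain q where tq: "t = 12 * q" using assms(2) by blast
  have q1: "1 \<le> q" using tq assms(1) by simp
  show ?thesis
  proof (intro exI[of _ "spE t"] conjI allI impI)
    show "is_tree {..<t^2+1} (spE t)" using spider_tree[OF assms(1)] .
  next
    fix c1 c2 f assume cs: "cat_strategy {..<t^2+1} c1 c2 f"
    interpret G: game t q c1 c2 f using tq q1 cs by unfold_locales auto
    show "\<exists>m. mouse_seq {..<t^2+1} (spE t) m \<and>
            (\<forall>i\<ge>1. real (rad {..<t^2+1} (spE t) (Mset {..<t^2+1} (spE t) c1 c2 f m i)) > real t / 12)"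
    proof (intro exI[of _ G.mouse] conjI allI impI)
      show "mouse_seq {..<t^2+1} (spE t) G.mouse" by (rule G.mouse_seq_ok)
    next
      fix i :: nat assume i: "1 \<le> i"
      let ?M = "Mset {..<t^2+1} (spE t) c1 c2 f G.mouse i"
      obtain v where v: "v \<in> ?M" "G.KK \<le> int (sd t (G.mouse i) v)" using G.far_exists[OF i] by blast
      have "sd t (G.mouse i) v \<le> 2 * rad {..<t^2+1} (spE t) ?M"
        using rad_lower[OF assms(1) Mset_sub[OF i] G.mouse_in_M v(1)] .
      then have "2 * q + 1 \<le> 2 * rad {..<t^2+1} (spE t) ?M" using v(2) unfolding G.KK_def by linarith
      then have "q + 1 \<le> rad {..<t^2+1} (spE t) ?M" by linarith
      then have "real q + 1 \<le> real (rad {..<t^2+1} (spE t) ?M)" by linarith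
      then show "real (rad {..<t^2+1} (spE t) ?M) > real t / 12" using tq by simp
    qed
  qed
qed

end
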